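(* Let $T\in\mathbb{T}$. (a) Let $v_1,\dots,v_k$ be the non-pendant vertices of $T$, with $v_i$ adjacent to exactly $t_i$ pendant vertices. Then the degree of $v_i$ in $T^{\#}$ is $t_i$. (b) If $T$ is neither a star nor a corona tree, then $T^{\#}$ contains at least one cycle of length $4$.
   Context: $\mathbb{T}$ is the class of simple undirected weighted trees $T$ (nonzero real weights on edges) such that (i) $T$ has at least one non-pendant vertex, and (ii) every non-pendant vertex of $T$ is adjacent to at least one pendant vertex (a vertex of degree one). The adjacency matrix $A$ of $T$ has $(i,j)$ entry equal to the weight of edge $v_iv_j$, or $0$ if no edge; $A^{\#}$ is its group inverse (unique $X$ with $AXA=A$, $XAX=X$, $AX=XA$); $T^{\#}$ is the weighted graph on the vertex set of $T$ with $v_iv_j$ an edge iff $(A^{\#})_{ij}\neq 0$, weighted by that entry. A corona tree is a tree obtained from some tree by attaching one new pendant vertex to each of its vertices. *)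

theory Defs
  imports "HOL-Analysis.Analysis"
begin

definition weighted_simple_graph :: "('v \<Rightarrow> 'v \<Rightarrow> real) \<Rightarrow> bool" where
  "weighted_simple_graph w \<longleftrightarrow> (\<forall>i j. w i j = w j i) \<and> (\<forall>i. w i i = 0)"

definition wedge :: "('v \<Rightarrow> 'v \<Rightarrow> real) \<Rightarrow> 'v \<Rightarrow> 'v \<Rightarrow> bool" where
  "wedge w i j \<longleftrightarrow> w i j \<noteq> 0"

definition gdegree :: "('v \<Rightarrow> 'v \<Rightarrow> bool) \<Rightarrow> 'v \<Rightarrow> nat" where
  "gdegree G v = card {u. G v u}"

definition pendant :: "('v \<Rightarrow> 'v \<Rightarrow> bool) \<Rightarrow> 'v \<Rightarrow> bool" where
  "pendant G v \<longleftrightarrow> gdegree G v = 1"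

definition has_cycle_len_on :: "'v set \<Rightarrow> ('v \<Rightarrow> 'v \<Rightarrow> bool) \<Rightarrow> nat \<Rightarrow> bool" where
  "has_cycle_len_on V G k \<longleftrightarrow> (\<exists>xs. length xs = k \<and> k \<ge> 3 \<and> distinct xs \<and> set xs \<subseteq> V \<and>
       (\<forall>i. Suc i < k \<longrightarrow> G (xs ! i) (xs ! Suc i)) \<and> G (xs ! (k - 1)) (xs ! 0))"

definition connected_on :: "'v set \<Rightarrow> ('v \<Rightarrow> 'v \<Rightarrow> bool) \<Rightarrow> bool" where
  "connected_on V G \<longleftrightarrow>
     (\<forall>x\<in>V. \<forall>y\<in>V. (x, y) \<in> {(a, b). a \<in> V \<and> b \<in> V \<and> G a b}\<^sup>*)"

definition is_tree_on :: "'v set \<Rightarrow> ('v \<Rightarrow> 'v \<Rightarrow> bool) \<Rightarrow> bool" where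
  "is_tree_on V G \<longleftrightarrow> V \<noteq> {} \<and> connected_on V G \<and> (\<forall>k. \<not> has_cycle_len_on V G k)"

definition weighted_tree :: "('v::finite \<Rightarrow> 'v \<Rightarrow> real) \<Rightarrow> bool" where
  "weighted_tree w \<longleftrightarrow> weighted_simple_graph w \<and> is_tree_on UNIV (wedge w)"

definition class_T :: "('v::finite \<Rightarrow> 'v \<Rightarrow> real) \<Rightarrow> bool" where
  "class_T w \<longleftrightarrow> weighted_tree w \<and> (\<exists>v. \<not> pendant (wedge w) v) \<and>
     (\<forall>v. \<not> pendant (wedge w) v \<longrightarrow> (\<exists>u. wedge w v u \<and> pendant (wedge w) u))"

definition is_star :: "('v \<Rightarrow> 'v \<Rightarrow> bool) \<Rightarrow> bool" where
  "is_star G \<longleftrightarrow> (\<exists>c. \<forall>v. v \<noteq> c \<longrightarrow> G c v)"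

(* corona tree: obtained from a tree on S by attaching one new pendant vertex f s to each s \<in> S *)
definition is_corona :: "('v \<Rightarrow> 'v \<Rightarrow> bool) \<Rightarrow> bool" where
  "is_corona G \<longleftrightarrow> (\<exists>S f. bij_betw f S (UNIV - S) \<and> is_tree_on S G \<and>
       (\<forall>s\<in>S. \<forall>x. G (f s) x \<longleftrightarrow> x = s))"

definition adj_matrix :: "('v::finite \<Rightarrow> 'v \<Rightarrow> real) \<Rightarrow> real^'v^'v" where
  "adj_matrix w = (\<chi> i j. w i j)"

definition is_group_inverse :: "real^'n^'n \<Rightarrow> real^'n^'n \<Rightarrow> bool" where
  "is_group_inverse A X \<longleftrightarrow> A ** X ** A = A \<and> X ** A ** X = X \<and> A ** X = X ** A"

definition group_inverse :: "real^'n^'n \<Rightarrow> real^'n^'n" where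
  "group_inverse A = (THE X. is_group_inverse A X)"

(* weights of T^#: entries of A^#; graph T^# (simple, so no loops) *)
definition sharp_weight :: "('v::finite \<Rightarrow> 'v \<Rightarrow> real) \<Rightarrow> 'v \<Rightarrow> 'v \<Rightarrow> real" where
  "sharp_weight w i j = (if i = j then 0 else group_inverse (adj_matrix w) $ i $ j)"

end

theory Submission imports Defs begin

lemma group_inverse_unique:
  fixes A X Y :: "real^'n^'n"
  assumes "is_group_inverse A X" "is_group_inverse A Y"
  shows "X = Y"
proof -
  have x1: "A ** X ** A = A" "X ** A ** X = X" "A ** X = X ** A" and
       y1: "A ** Y ** A = A" "Y ** A ** Y = Y" "A ** Y = Y ** A"
    using assms unfolding is_group_inverse_def by auto
  have E2: "A ** X = (A ** X) ** (A ** Y)"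
  proof -
    have "A ** X = X ** A" using x1 by simp
    also have "\<dots> = X ** (A ** Y ** A)" using y1 by simp
    also have "\<dots> = (X ** A) ** (Y ** A)" by (simp add: matrix_mul_assoc)
    also have "\<dots> = (A ** X) ** (A ** Y)" using x1 y1 by simp
    finally show ?thesis .
  qed
  have F1: "A ** Y = (A ** X) ** (A ** Y)"
  proof -
    have "A ** Y = (A ** X ** A) ** Y" using x1 by simp
    also have "\<dots> = (A ** X) ** (A ** Y)" by (simp add: matrix_mul_assoc)
    finally show ?thesis .
  qed
  have EF: "A ** X = A ** Y" using E2 F1 by simp
  have "X = (X ** A) ** X" using x1 by simp
  also have "\<dots> = (A ** X) ** X" using x1 by simp
  also have "\<dots> = (Y ** A) ** X" using EF y1 by simp
  also have "\<dots> = Y ** (A ** X)" by (simp add: matrix_mul_assoc)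
  also have "\<dots> = Y ** (A ** Y)" using EF by simp
  also have "\<dots> = Y ** A ** Y" by (simp add: matrix_mul_assoc)
  also have "\<dots> = Y" using y1 by simp
  finally show ?thesis .
qed

lemma matrix_add_rdistrib': "((B + C) ** A) = (B ** A) + (C ** A)"
  by (vector matrix_matrix_mult_def sum.distrib[symmetric] field_simps)
lemma matrix_sub_ldistrib': "(A ** (B - C)) = (A ** B) - (A ** C)"
  for A :: "'a::ring_1^'n^'m"
  by (vector matrix_matrix_mult_def sum_subtractf[symmetric] field_simps)
lemma matrix_sub_rdistrib': "((B - C) ** A) = (B ** A) - (C ** A)"
  for A :: "'a::ring_1^'n^'m"
  by (vector matrix_matrix_mult_def sum_subtractf[symmetric] field_simps)

lemma diag_mult_left: "((\<chi> i j. if i = j then f i else 0) ** M) $ i $ j = f i * M $ i $ j"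
  for M :: "'a::semiring_1^'n^'m"
  by (simp add: matrix_matrix_mult_def if_distrib if_distribR cong: if_cong)
lemma diag_mult_right: "(M ** (\<chi> i j. if i = j then f i else 0)) $ i $ j = M $ i $ j * f j"
  for M :: "'a::semiring_1^'n^'m"
  by (simp add: matrix_matrix_mult_def if_distrib if_distribR cong: if_cong)

definition diagm :: "('n::finite \<Rightarrow> real) \<Rightarrow> real^'n^'n" where
  "diagm f = (\<chi> i j. if i = j then f i else 0)"

lemma diagm_left: "(diagm f ** M) $ i $ j = f i * M $ i $ j"
  unfolding diagm_def by (rule diag_mult_left)
lemma diagm_right: "(M ** diagm f) $ i $ j = M $ i $ j * f j"
  unfolding diagm_def by (rule diag_mult_right)

locale cT =
  fixes w :: "'v::finite \<Rightarrow> 'v \<Rightarrow> real"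
  assumes cT: "class_T w"
begin

abbreviation pend where "pend v \<equiv> pendant (wedge w) v"

lemma symw: "w i j = w j i"
  using cT unfolding class_T_def weighted_tree_def weighted_simple_graph_def by auto
lemma diagw: "w i i = 0"
  using cT unfolding class_T_def weighted_tree_def weighted_simple_graph_def by auto

lemma pend_iff: "pend p \<longleftrightarrow> card {u. w p u \<noteq> 0} = 1"
  unfolding pendant_def gdegree_def wedge_def by simp

lemma conn: "(x, y) \<in> {(a, b). w a b \<noteq> 0}\<^sup>*"
  using cT unfolding class_T_def weighted_tree_def is_tree_on_def connected_on_def wedge_def
  by auto

lemma acyc: "\<not> has_cycle_len_on UNIV (wedge w) k"
  using cT unfolding class_T_def weighted_tree_def is_tree_on_def by auto

lemma ex_np: "\<exists>v. \<not> pend v"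
  using cT unfolding class_T_def by auto

lemma np_has_pend: "\<not> pend v \<Longrightarrow> \<exists>u. w v u \<noteq> 0 \<and> pend u"
  using cT unfolding class_T_def wedge_def by auto

definition par where "par p = (SOME q. w p q \<noteq> 0)"

lemma pend_unique: assumes "pend p" "w p i \<noteq> 0" "w p j \<noteq> 0" shows "i = j"
proof -
  from assms(1) have "card {u. w p u \<noteq> 0} = 1" by (simp add: pend_iff)
  then obtain a where "{u. w p u \<noteq> 0} = {a}" by (rule card_1_singletonE)
  then have "i \<in> {a}" "j \<in> {a}" using assms(2,3) by blast+
  then show ?thesis by simp
qed

lemma par_adj: assumes "pend p" shows "w p (par p) \<noteq> 0"
proof -
  from assms have "card {u. w p u \<noteq> 0} = 1" by (simp add: pend_iff)
  then obtain a where "{u. w p u \<noteq> 0} = {a}" by (rule card_1_singletonE)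
  then have "\<exists>q. w p q \<noteq> 0" by auto
  then show ?thesis unfolding par_def by (rule someI_ex)
qed

lemma par_eq: "pend p \<Longrightarrow> w p q \<noteq> 0 \<Longrightarrow> q = par p"
  using pend_unique par_adj by blast

lemma par_np: assumes "pend p" shows "\<not> pend (par p)"
proof
  assume qp: "pend (par p)"
  let ?q = "par p"
  have pq: "par ?q = p" using par_eq[OF qp] par_adj[OF assms] symw by metis
  have "y \<in> {p, ?q}" if "(p, y) \<in> {(a, b). w a b \<noteq> 0}\<^sup>*" for y
    using that
  proof (induction rule: rtrancl_induct)
    case base then show ?case by simp
  next
    case (step y z)
    then have "w y z \<noteq> 0" by simp
    with step.IH show ?case using par_eq[OF assms] par_eq[OF qp] pq by auto
  qed
  moreover obtain v where "\<not> pend v" using ex_np by blast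
  ultimately show False using conn[of p v] assms qp by auto
qed

lemma no_pp: "pend p \<Longrightarrow> pend q \<Longrightarrow> w p q = 0"
  using par_eq par_np by blast

definition dd where "dd v = (\<Sum>u\<in>UNIV. if pend u then (w v u)^2 else 0)"

lemma dd_pos: assumes "\<not> pend v" shows "dd v > 0"
proof -
  obtain u where u: "w v u \<noteq> 0" "pend u" using np_has_pend[OF assms] by blast
  have "0 < (if pend u then (w v u)^2 else 0)" using u by simp
  also have "\<dots> \<le> dd v" unfolding dd_def
    by (rule member_le_sum) auto
  finally show ?thesis .
qed

definition proj where "proj y = (if pend y then par y else y)"

lemma connN: assumes "\<not> pend x" "(x, y) \<in> {(a, b). w a b \<noteq> 0}\<^sup>*"
  shows "(x, proj y) \<in> {(a, b). \<not> pend a \<and> \<not> pend b \<and> w a b \<noteq> 0}\<^sup>*"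
  using assms(2)
proof (induction rule: rtrancl_induct)
  case base then show ?case using assms(1) by (simp add: proj_def)
next
  case (step y z)
  then have yz: "w y z \<noteq> 0" by simp
  show ?case
  proof (cases "pend y")
    case True
    then have "z = par y" using par_eq yz by blast
    then have "proj z = proj y" using True par_np[OF True] by (simp add: proj_def)
    then show ?thesis using step.IH by simp
  next
    case False
    show ?thesis
    proof (cases "pend z")
      case True
      then have "y = par z" using par_eq yz symw by metis
      then have "proj z = proj y" using True False by (simp add: proj_def)
      then show ?thesis using step.IH by simp
    next
      case F2: False
      then show ?thesis using step.IH False yz
        by (simp add: proj_def) (erule rtrancl_into_rtrancl; simp)
    qed
  qed
qed

lemma connN': "\<not> pend x \<Longrightarrow> \<not> pend y \<Longrightarrow> (x, y) \<in> {(a, b). \<not> pend a \<and> \<not> pend b \<and> w a b \<noteq> 0}\<^sup>*"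
  using connN[OF _ conn, of x y] by (simp add: proj_def)

end
context cT begin

definition "Bm = (\<chi> i j. if \<not> pend i \<and> \<not> pend j then w i j else 0)"
definition "Cm = (\<chi> i j. if \<not> pend i \<and> pend j then w i j else 0)"
definition "Ctm = (\<chi> i j. if pend i \<and> \<not> pend j then w i j else 0)"
definition "Di = diagm (\<lambda>i. if pend i then 0 else 1 / dd i)"
definition "Dm = diagm (\<lambda>i. if pend i then 0 else dd i)"
definition "Pn = diagm (\<lambda>i. if pend i then 0 else 1)"
definition "Xm = Di ** Cm + Ctm ** Di - Ctm ** (Di ** (Bm ** (Di ** Cm)))"

lemma A_eq: "adj_matrix w = Bm + Cm + Ctm"
  by (auto simp: vec_eq_iff adj_matrix_def Bm_def Cm_def Ctm_def no_pp)

lemma BCt: "Bm ** Ctm = 0"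
  by (auto simp: vec_eq_iff matrix_matrix_mult_def Bm_def Ctm_def intro!: sum.neutral)
lemma CC: "Cm ** Cm = 0"
  by (auto simp: vec_eq_iff matrix_matrix_mult_def Cm_def intro!: sum.neutral)
lemma CtCt: "Ctm ** Ctm = 0"
  by (auto simp: vec_eq_iff matrix_matrix_mult_def Ctm_def intro!: sum.neutral)
lemma CB: "Cm ** Bm = 0"
  by (auto simp: vec_eq_iff matrix_matrix_mult_def Bm_def Cm_def intro!: sum.neutral)
lemma CDi: "Cm ** Di = 0"
  by (auto simp: vec_eq_iff diagm_right Cm_def Di_def)
lemma PnCt: "Pn ** Ctm = 0"
  by (auto simp: vec_eq_iff diagm_left Pn_def Ctm_def)
lemma DDi: "Dm ** Di = Pn"
  unfolding Dm_def Di_def Pn_def using dd_pos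
  by (auto simp: vec_eq_iff diagm_left, auto simp: diagm_def dest: dd_pos)
lemma DiD: "Di ** Dm = Pn"
  unfolding Dm_def Di_def Pn_def using dd_pos
  by (auto simp: vec_eq_iff diagm_left, auto simp: diagm_def dest: dd_pos)
lemma PnB: "Pn ** Bm = Bm"
  by (auto simp: vec_eq_iff diagm_left Pn_def Bm_def)
lemma BPn: "Bm ** Pn = Bm"
  by (auto simp: vec_eq_iff diagm_right Pn_def Bm_def)
lemma PnC: "Pn ** Cm = Cm"
  by (auto simp: vec_eq_iff diagm_left Pn_def Cm_def)
lemma CtPn: "Ctm ** Pn = Ctm"
  by (auto simp: vec_eq_iff diagm_right Pn_def Ctm_def)
lemma PnDi: "Pn ** Di = Di"
  unfolding Pn_def Di_def
  by (auto simp: vec_eq_iff diagm_left, auto simp: diagm_def dest: dd_pos)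

lemma DiCt: "Di ** Ctm = 0"
  by (auto simp: vec_eq_iff diagm_left Di_def Ctm_def)
lemma DiPn: "Di ** Pn = Di"
  unfolding Pn_def Di_def
  by (auto simp: vec_eq_iff diagm_right, auto simp: diagm_def dest: dd_pos)

lemma CCt: "Cm ** Ctm = Dm"
proof -
  have "(Cm ** Ctm) $ i $ j = Dm $ i $ j" for i j
  proof (cases "\<not> pend i \<and> \<not> pend j")
    case True
    show ?thesis
    proof (cases "i = j")
      case True
      have e: "w i k * w k i = (w i k)^2" for k using symw[of k i] by (simp add: power2_eq_square)
      with \<open>\<not> pend i \<and> \<not> pend j\<close> True show ?thesis
        by (auto simp: matrix_matrix_mult_def Cm_def Ctm_def Dm_def diagm_def dd_def
            intro!: sum.cong)
    next
      case False
      have "w i k * w k j = 0" if "pend k" for k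
        using pend_unique[OF that, of i j] False symw[of i k] by auto
      with True False show ?thesis
        by (auto simp: matrix_matrix_mult_def Cm_def Ctm_def Dm_def diagm_def intro!: sum.neutral)
    qed
  next
    case False
    then show ?thesis
      by (auto simp: matrix_matrix_mult_def Cm_def Ctm_def Dm_def diagm_def intro!: sum.neutral)
  qed
  then show ?thesis by (simp add: vec_eq_iff)
qed

end
context cT begin

lemmas massoc = matrix_mul_assoc[symmetric]
lemma lift0: "X ** Y = 0 \<Longrightarrow> X ** (Y ** M) = 0" for X :: "real^'a^'a"
  by (simp add: matrix_mul_assoc)
lemma liftE: "X ** Y = W \<Longrightarrow> X ** (Y ** M) = W ** M" for X :: "real^'a^'a"
  by (simp add: matrix_mul_assoc)

lemmas rules = BCt CC CtCt CB CDi PnCt lift0[OF BCt] lift0[OF CC] lift0[OF CtCt] lift0[OF CB]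
  lift0[OF CDi] lift0[OF PnCt] DiCt lift0[OF DiCt] DiPn liftE[OF DiPn]
  DDi DiD PnB BPn PnC CtPn PnDi CCt liftE[OF DDi] liftE[OF DiD] liftE[OF PnB] liftE[OF BPn]
  liftE[OF PnC] liftE[OF CtPn] liftE[OF PnDi] liftE[OF CCt]

lemmas dist = matrix_add_ldistrib matrix_add_rdistrib' matrix_sub_ldistrib' matrix_sub_rdistrib'

lemma AX: "(Bm + Cm + Ctm) ** Xm = Pn + Ctm ** (Di ** Cm)"
  unfolding Xm_def by (simp add: dist massoc rules)
lemma XA: "Xm ** (Bm + Cm + Ctm) = Pn + Ctm ** (Di ** Cm)"
  unfolding Xm_def by (simp add: dist massoc rules)
lemma AXA: "(Bm + Cm + Ctm) ** Xm ** (Bm + Cm + Ctm) = Bm + Cm + Ctm"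
  unfolding AX by (simp add: dist massoc rules)
lemma XAX: "Xm ** (Bm + Cm + Ctm) ** Xm = Xm"
  unfolding XA by (simp add: Xm_def dist massoc rules)

lemma ginv: "group_inverse (adj_matrix w) = Xm"
proof -
  have g: "is_group_inverse (adj_matrix w) Xm"
    unfolding is_group_inverse_def A_eq using AXA XAX AX XA by simp
  show ?thesis unfolding group_inverse_def
    by (rule the_equality[where P = "is_group_inverse (adj_matrix w)", OF g])
      (rule group_inverse_unique[OF _ g])
qed

end

lemma single_right: assumes "\<And>k. k \<noteq> c \<Longrightarrow> N $ k $ j = 0"
  shows "(M ** N) $ i $ j = M $ i $ c * (N $ c $ j :: real)"
proof -
  have "(M ** N) $ i $ j = (\<Sum>k\<in>UNIV. M $ i $ k * N $ k $ j)"
    by (simp add: matrix_matrix_mult_def)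
  also have "\<dots> = M $ i $ c * N $ c $ j + (\<Sum>k\<in>UNIV - {c}. M $ i $ k * N $ k $ j)"
    by (rule sum.remove) auto
  also have "(\<Sum>k\<in>UNIV - {c}. M $ i $ k * N $ k $ j) = 0"
    by (rule sum.neutral) (simp add: assms)
  finally show ?thesis by simp
qed

lemma single_left: assumes "\<And>k. k \<noteq> c \<Longrightarrow> M $ i $ k = 0"
  shows "(M ** N) $ i $ j = M $ i $ c * (N $ c $ j :: real)"
proof -
  have "(M ** N) $ i $ j = (\<Sum>k\<in>UNIV. M $ i $ k * N $ k $ j)"
    by (simp add: matrix_matrix_mult_def)
  also have "\<dots> = M $ i $ c * N $ c $ j + (\<Sum>k\<in>UNIV - {c}. M $ i $ k * N $ k $ j)"
    by (rule sum.remove) auto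
  also have "(\<Sum>k\<in>UNIV - {c}. M $ i $ k * N $ k $ j) = 0"
    by (rule sum.neutral) (simp add: assms)
  finally show ?thesis by simp
qed

context cT begin

lemma Di_left: "(Di ** M) $ i $ j = (if pend i then 0 else 1 / dd i) * M $ i $ j"
  by (simp add: Di_def diagm_left)
lemma Di_right: "(M ** Di) $ i $ j = M $ i $ j * (if pend j then 0 else 1 / dd j)"
  by (simp add: Di_def diagm_right)

lemma XN: assumes "\<not> pend v" shows "Xm $ v $ u = (if pend u then w v u / dd v else 0)"
proof -
  have "(Ctm ** M) $ v $ u = 0" for M
    using assms by (simp add: matrix_matrix_mult_def Ctm_def)
  then show ?thesis using assms
    by (simp add: Xm_def Di_def diagm_left diagm_right Cm_def Ctm_def)
qed

lemma XPN: assumes "pend p" shows "Xm $ p $ par p = w p (par p) / dd (par p)"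
proof -
  have "(Ctm ** M) $ p $ par p = 0" if "\<And>k. M $ k $ par p = 0" for M
    using that by (simp add: matrix_matrix_mult_def)
  moreover have "(Di ** (Bm ** (Di ** Cm))) $ k $ par p = 0" for k
    using par_np[OF assms]
    by (simp add: Di_def diagm_left matrix_matrix_mult_def Cm_def)
  ultimately show ?thesis using assms par_np[OF assms]
    by (simp add: Xm_def Di_def diagm_left diagm_right Cm_def Ctm_def)
qed

lemma XPP: assumes p: "pend p" and q: "pend q"
  shows "Xm $ p $ q = - (w p (par p) * (1 / dd (par p) * (w (par p) (par q) *
     (1 / dd (par q) * w (par q) q))))"
proof -
  have r1: "(Ctm ** M) $ p $ q = w p (par p) * M $ par p $ q" for M
  proof -
    have "(Ctm ** M) $ p $ q = Ctm $ p $ par p * M $ par p $ q"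
      by (rule single_left) (use p par_eq[OF p] in \<open>auto simp: Ctm_def\<close>)
    then show ?thesis using p par_np[OF p] by (simp add: Ctm_def)
  qed
  have r2: "(Bm ** (Di ** Cm)) $ a $ q = Bm $ a $ par q * (Di ** Cm) $ par q $ q" for a
  proof (rule single_right)
    fix k assume k: "k \<noteq> par q"
    have "w k q = 0"
    proof (rule ccontr)
      assume "w k q \<noteq> 0"
      then have "w q k \<noteq> 0" using symw[of q k] by simp
      then show False using par_eq[OF q] k by blast
    qed
    then show "(Di ** Cm) $ k $ q = 0" by (simp add: Di_left Cm_def)
  qed
  have t: "(Ctm ** (Di ** (Bm ** (Di ** Cm)))) $ p $ q = w p (par p) * (1 / dd (par p) * (w (par p) (par q) *
     (1 / dd (par q) * w (par q) q)))"
    using p q par_np[OF p] par_np[OF q]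
    by (simp add: r1 Di_left r2, simp add: Bm_def Cm_def Di_left)
  have "Xm $ p $ q = (Di ** Cm) $ p $ q + (Ctm ** Di) $ p $ q - (Ctm ** (Di ** (Bm ** (Di ** Cm)))) $ p $ q"
    by (simp add: Xm_def)
  then show ?thesis using t p q by (simp add: Di_left Di_right Cm_def Ctm_def)
qed

end
context cT begin

lemma sw: "sharp_weight w i j = (if i = j then 0 else Xm $ i $ j)"
  by (simp add: sharp_weight_def ginv)

lemma partA: assumes "\<not> pend v"
  shows "gdegree (wedge (sharp_weight w)) v = card {u. wedge w v u \<and> pend u}"
proof -
  have "{u. wedge (sharp_weight w) v u} = {u. wedge w v u \<and> pend u}"
  proof (rule set_eqI)
    fix u
    show "u \<in> {u. wedge (sharp_weight w) v u} \<longleftrightarrow> u \<in> {u. wedge w v u \<and> pend u}"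
    proof (cases "u = v")
      case True
      then show ?thesis using assms diagw[of v] by (simp add: wedge_def sw)
    next
      case False
      have "Xm $ v $ u \<noteq> 0 \<longleftrightarrow> w v u \<noteq> 0 \<and> pend u"
        using dd_pos[OF assms] by (simp add: XN[OF assms])
      then show ?thesis using False by (simp add: wedge_def sw)
    qed
  qed
  then show ?thesis by (simp add: gdegree_def)
qed

lemma two_np: assumes "\<not> is_star (wedge w)" shows "\<exists>v v'. \<not> pend v \<and> \<not> pend v' \<and> v \<noteq> v'"
proof (rule ccontr)
  assume H: "\<not> ?thesis"
  obtain c where c: "\<not> pend c" using ex_np by blast
  have "wedge w c v" if "v \<noteq> c" for v
  proof -
    have pv: "pend v" using H c that by blast
    have "par v = c" using H c par_np[OF pv] by blast
    then show ?thesis using par_adj[OF pv] symw[of c v] by (simp add: wedge_def)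
  qed
  then have "is_star (wedge w)" unfolding is_star_def by blast
  with assms show False by simp
qed

lemma cyc_mono: "has_cycle_len_on S G k \<Longrightarrow> has_cycle_len_on UNIV G k"
  unfolding has_cycle_len_on_def by blast

lemma two_pend: assumes "\<not> is_corona (wedge w)"
  shows "\<exists>v p1 p2. \<not> pend v \<and> pend p1 \<and> pend p2 \<and> p1 \<noteq> p2 \<and> w v p1 \<noteq> 0 \<and> w v p2 \<noteq> 0"
proof (rule ccontr)
  assume H: "\<not> ?thesis"
  define S where "S = {v. \<not> pend v}"
  define f where "f v = (SOME u. w v u \<noteq> 0 \<and> pend u)" for v
  have fS: "w v (f v) \<noteq> 0 \<and> pend (f v)" if "\<not> pend v" for v
    unfolding f_def using np_has_pend[OF that] by (rule someI_ex)
  have uniq: "u = f v" if "\<not> pend v" "pend u" "w v u \<noteq> 0" for u v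
    using H fS[OF that(1)] that by blast
  have parf: "par (f v) = v" if "\<not> pend v" for v
    using fS[OF that] par_eq symw by metis
  have bij: "bij_betw f S (UNIV - S)"
  proof (rule bij_betw_imageI)
    show "inj_on f S" unfolding S_def by (rule inj_onI) (metis mem_Collect_eq parf)
    show "f ` S = UNIV - S"
    proof
      show "f ` S \<subseteq> UNIV - S" using fS unfolding S_def by auto
      show "UNIV - S \<subseteq> f ` S"
      proof
        fix p assume "p \<in> UNIV - S"
        then have p: "pend p" unfolding S_def by auto
        have "p = f (par p)"
          using uniq[OF par_np[OF p] p] par_adj[OF p] symw by metis
        then show "p \<in> f ` S" using par_np[OF p] unfolding S_def by blast
      qed
    qed
  qed
  have tree: "is_tree_on S (wedge w)"
    unfolding is_tree_on_def
  proof (intro conjI allI)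
    show "S \<noteq> {}" using ex_np unfolding S_def by auto
    have eq: "{(a, b). a \<in> S \<and> b \<in> S \<and> wedge w a b} = {(a, b). \<not> pend a \<and> \<not> pend b \<and> w a b \<noteq> 0}"
      unfolding S_def by (auto simp: wedge_def)
    show "connected_on S (wedge w)"
      unfolding connected_on_def eq using connN' unfolding S_def by blast
    show "\<not> has_cycle_len_on S (wedge w) k" for k using acyc cyc_mono by blast
  qed
  have adj: "\<forall>s\<in>S. \<forall>x. wedge w (f s) x \<longleftrightarrow> x = s"
  proof (intro ballI allI)
    fix s x assume "s \<in> S"
    then have s: "\<not> pend s" unfolding S_def by auto
    show "wedge w (f s) x \<longleftrightarrow> x = s"
      using fS[OF s] par_eq[of "f s" x] parf[OF s] symw[of s "f s"] unfolding wedge_def by auto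
  qed
  have "is_corona (wedge w)" unfolding is_corona_def using bij tree adj by blast
  with assms show False by simp
qed

lemma partB: assumes "\<not> is_star (wedge w)" "\<not> is_corona (wedge w)"
  shows "has_cycle_len_on UNIV (wedge (sharp_weight w)) 4"
proof -
  obtain v p1 p2 where v: "\<not> pend v" "pend p1" "pend p2" "p1 \<noteq> p2" "w v p1 \<noteq> 0" "w v p2 \<noteq> 0"
    using two_pend[OF assms(2)] by blast
  obtain v' where v': "\<not> pend v'" "v' \<noteq> v" using two_np[OF assms(1)] by blast
  have "(v, v') \<in> {(a, b). \<not> pend a \<and> \<not> pend b \<and> w a b \<noteq> 0}\<^sup>*" using connN' v(1) v'(1) by blast
  then obtain u where u: "\<not> pend u" "w v u \<noteq> 0"
  proof (cases rule: converse_rtranclE)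
    case base then show ?thesis using v'(2) by simp
  next
    case (step y) then show ?thesis using that by blast
  qed
  have uv: "u \<noteq> v" using u(2) diagw[of v] by auto
  obtain q where q: "pend q" "w u q \<noteq> 0" using np_has_pend[OF u(1)] by blast
  have wp1: "w p1 v \<noteq> 0" "w p2 v \<noteq> 0" "w q u \<noteq> 0"
    using v(5) v(6) q(2) symw[of p1 v] symw[of p2 v] symw[of q u] by simp_all
  have wvu: "w u v \<noteq> 0" using u(2) symw[of u v] by simp
  have pp1: "par p1 = v" using par_eq[OF v(2) wp1(1)] by simp
  have pp2: "par p2 = v" using par_eq[OF v(3) wp1(2)] by simp
  have pq: "par q = u" using par_eq[OF q(1) wp1(3)] by simp
  have dv: "dd v > 0" "dd u > 0" using dd_pos[OF u(1)] dd_pos[OF v(1)] by auto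
  have d: "p1 \<noteq> q" "p2 \<noteq> q" "p1 \<noteq> v" "p2 \<noteq> v" "q \<noteq> v"
    using pp1 pp2 pq uv v(1,2,3) q(1) by auto
  have e1: "Xm $ p1 $ q \<noteq> 0" using XPP[OF v(2) q(1)] pp1 pq wp1 u q dv by simp
  have e2: "Xm $ q $ p2 \<noteq> 0" using XPP[OF q(1) v(3)] pp2 pq wp1 wvu v dv by simp
  have e3: "Xm $ p2 $ v \<noteq> 0" using XPN[OF v(3)] pp2 wp1 dv by simp
  have e4: "Xm $ v $ p1 \<noteq> 0" using XN[OF v(1)] v dv by simp
  have s1: "wedge (sharp_weight w) p1 q" using e1 d by (simp add: wedge_def sw)
  have s2: "wedge (sharp_weight w) q p2" using e2 d by (simp add: wedge_def sw)
  have s3: "wedge (sharp_weight w) p2 v" using e3 d by (simp add: wedge_def sw)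
  have s4: "wedge (sharp_weight w) v p1" using e4 d by (simp add: wedge_def sw)
  have dist: "distinct [p1, q, p2, v]" using d v(4) by simp
  have step: "wedge (sharp_weight w) ([p1, q, p2, v] ! i) ([p1, q, p2, v] ! Suc i)" if "Suc i < 4" for i
  proof -
    from that have "i = 0 \<or> i = 1 \<or> i = 2" by auto
    then show ?thesis using s1 s2 s3 by (elim disjE) simp_all
  qed
  show ?thesis unfolding has_cycle_len_on_def
  proof (rule exI[of _ "[p1, q, p2, v]"], intro conjI allI impI)
    show "length [p1, q, p2, v] = 4" by simp
    show "(4::nat) \<ge> 3" by simp
    show "distinct [p1, q, p2, v]" by (rule dist)
    show "set [p1, q, p2, v] \<subseteq> UNIV" by simp
    show "wedge (sharp_weight w) ([p1, q, p2, v] ! i) ([p1, q, p2, v] ! Suc i)" if "Suc i < 4" for i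
      using step that .
    show "wedge (sharp_weight w) ([p1, q, p2, v] ! (4 - 1)) ([p1, q, p2, v] ! 0)"
      using s4 by simp
  qed
qed

end

theorem corollary3p7:
  fixes w :: "'v::finite \<Rightarrow> 'v \<Rightarrow> real"
  assumes "class_T w"
  shows "(\<forall>v. \<not> pendant (wedge w) v \<longrightarrow>
            gdegree (wedge (sharp_weight w)) v = card {u. wedge w v u \<and> pendant (wedge w) u})
       \<and> (\<not> is_star (wedge w) \<and> \<not> is_corona (wedge w) \<longrightarrow>
            has_cycle_len_on UNIV (wedge (sharp_weight w)) 4)"
proof -
  interpret cT w using assms by unfold_locales
  show ?thesis using partA partB by blast
qed

end
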